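(* Let $N\ge 1$, let $q$ be an indeterminate and $z_1,\dots,z_N$ indeterminates, and put $\delta=(N-1,N-2,\dots,0)$. Then $$\prod_{1\le i<j\le N}(z_i-q^{-2}z_j)=\sum_{w\in S_N}(-q^{-2})^{\ell(w)}z^{w(\delta)}+\sum_{\gamma}a_{\gamma}\,z_1^{\gamma_1}z_2^{\gamma_2}\cdots z_N^{\gamma_N},$$ where the second sum is finite, and for each monomial $z_1^{\gamma_1}\cdots z_N^{\gamma_N}$ occurring in it there exist $i\neq j$ with $\gamma_i=\gamma_j$, and its coefficient satisfies $a_\gamma\in\mathbb{Z}[q^{-2}]$ and $a_\gamma(1)=0$ (i.e. $a_\gamma$ vanishes at $q^{-2}=1$).
   Context: $S_N$ is the symmetric group on $\{1,\dots,N\}$ and $\ell(w)$ is the number of inversions of $w$, i.e. the number of pairs $i<j$ with $w(i)>w(j)$. For $w\in S_N$, $z^{w(\delta)}$ denotes the monomial $\prod_{i=1}^N z_{w(i)}^{\,N-i}$. *)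

theory Defs
  imports "HOL-Library.Poly_Mapping" "HOL-Computational_Algebra.Polynomial"
    "HOL-Combinatorics.Permutations"
begin

text \<open>Multivariate polynomials in variables z_1, z_2, ... (indexed by nat) with
  coefficients in Z[t], where t stands for q^{-2}.\<close>
type_synonym mpoly = "(nat \<Rightarrow>\<^sub>0 nat) \<Rightarrow>\<^sub>0 int poly"

definition zvar :: "nat \<Rightarrow> mpoly" where
  "zvar i = Poly_Mapping.single (Poly_Mapping.single i 1) 1"

definition const :: "int poly \<Rightarrow> mpoly" where
  "const c = Poly_Mapping.single 0 c"

definition tvar :: "int poly" where
  "tvar = [:0, 1:]"

definition inversions :: "nat \<Rightarrow> (nat \<Rightarrow> nat) \<Rightarrow> nat" where
  "inversions N w = card {(i, j). i \<in> {1..N} \<and> j \<in> {1..N} \<and> i < j \<and> w i > w j}"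

end

theory Submission
  imports Defs
begin

definition Prs :: "nat \<Rightarrow> (nat \<times> nat) set" where
  "Prs N = {(i, j). i \<in> {1..N} \<and> j \<in> {1..N} \<and> i < j}"

definition score :: "nat \<Rightarrow> (nat \<times> nat) set \<Rightarrow> (nat \<Rightarrow>\<^sub>0 nat)" where
  "score N B = (\<Sum>p\<in>B. Poly_Mapping.single (fst p) 1) + (\<Sum>p\<in>Prs N - B. Poly_Mapping.single (snd p) 1)"

definition tterm :: "nat \<Rightarrow> (nat \<times> nat) set \<Rightarrow> mpoly" where
  "tterm N B = Poly_Mapping.single (score N B) ((- tvar) ^ card (Prs N - B))"

lemma finite_Prs[simp]: "finite (Prs N)"
  by (rule finite_subset[of _ "{1..N} \<times> {1..N}"]) (auto simp: Prs_def)

lemma prod_single: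
  fixes k :: "'b \<Rightarrow> 'k::comm_monoid_add" and c :: "'b \<Rightarrow> 'c::comm_semiring_1"
  shows "finite A \<Longrightarrow> (\<Prod>x\<in>A. Poly_Mapping.single (k x) (c x)) = Poly_Mapping.single (\<Sum>x\<in>A. k x) (\<Prod>x\<in>A. c x)"
  by (induct A rule: finite_induct) (auto simp: mult_single)

lemma zvar_pow: "zvar k ^ n = Poly_Mapping.single (Poly_Mapping.single k n) 1"
proof (induct n)
  case 0 then show ?case by simp
next
  case (Suc n)
  have "Poly_Mapping.single k (Suc n) = Poly_Mapping.single k 1 + Poly_Mapping.single k n"
    by (metis plus_1_eq_Suc single_add)
  with Suc show ?case by (simp add: zvar_def mult_single)
qed

lemma expand:
  "(\<Prod>(i, j) \<in> {(i, j). i \<in> {1..N} \<and> j \<in> {1..N} \<and> i < j}. zvar i - const tvar * zvar j)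
   = (\<Sum>B\<in>Pow (Prs N). tterm N B)"
proof -
  have "(\<Prod>(i, j) \<in> {(i, j). i \<in> {1..N} \<and> j \<in> {1..N} \<and> i < j}. zvar i - const tvar * zvar j)
     = (\<Prod>p\<in>Prs N. Poly_Mapping.single (Poly_Mapping.single (fst p) 1) 1
          + Poly_Mapping.single (Poly_Mapping.single (snd p) 1) (- tvar))"
    unfolding Prs_def
    by (rule prod.cong) (auto simp: zvar_def const_def mult_single single_uminus)
  also have "\<dots> = (\<Sum>B\<in>Pow (Prs N). (\<Prod>p\<in>B. Poly_Mapping.single (Poly_Mapping.single (fst p) 1) 1) *
      (\<Prod>p\<in>Prs N - B. Poly_Mapping.single (Poly_Mapping.single (snd p) 1) (- tvar)))"
    by (rule prod_add) simp
  also have "\<dots> = (\<Sum>B\<in>Pow (Prs N). tterm N B)"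
  proof (rule sum.cong)
    fix B assume "B \<in> Pow (Prs N)"
    then have f: "finite B" "finite (Prs N - B)" by (auto intro: finite_subset)
    show "(\<Prod>p\<in>B. Poly_Mapping.single (Poly_Mapping.single (fst p) 1) 1) *
      (\<Prod>p\<in>Prs N - B. Poly_Mapping.single (Poly_Mapping.single (snd p) 1) (- tvar)) = tterm N B"
      by (simp add: prod_single[OF f(1)] prod_single[OF f(2)] mult_single tterm_def score_def)
  qed simp
  finally show ?thesis .
qed

lemma sterm:
  "const ((- tvar) ^ k) * (\<Prod>i \<in> {1..N}. zvar (w i) ^ (N - i))
   = Poly_Mapping.single (\<Sum>i\<in>{1..N}. Poly_Mapping.single (w i) (N - i)) ((- tvar) ^ k)"
  by (simp add: zvar_pow prod_single const_def mult_single)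

lemma Prs_lt: "B \<subseteq> Prs N \<Longrightarrow> (x, y) \<in> B \<Longrightarrow> x < y \<and> x \<in> {1..N} \<and> y \<in> {1..N}"
  unfolding Prs_def by blast


definition beats :: "nat \<Rightarrow> (nat \<times> nat) set \<Rightarrow> nat \<Rightarrow> nat \<Rightarrow> bool" where
  "beats N B x y \<longleftrightarrow> (x, y) \<in> B \<or> (y, x) \<in> Prs N - B"

lemma beats_V: "B \<subseteq> Prs N \<Longrightarrow> beats N B x y \<Longrightarrow> x \<in> {1..N} \<and> y \<in> {1..N} \<and> x \<noteq> y"
  by (auto simp: beats_def Prs_def)

lemma beats_total: "x \<in> {1..N} \<Longrightarrow> y \<in> {1..N} \<Longrightarrow> x \<noteq> y \<Longrightarrow> beats N B x y \<or> beats N B y x"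
  by (cases "x < y") (auto simp: beats_def Prs_def)

lemma beats_asym: "B \<subseteq> Prs N \<Longrightarrow> beats N B x y \<Longrightarrow> \<not> beats N B y x"
  using Prs_lt[of B N x y] Prs_lt[of B N y x] unfolding beats_def by (auto simp: Prs_def)

lemma beats_in: "B \<subseteq> Prs N \<Longrightarrow> (i, j) \<in> Prs N \<Longrightarrow> beats N B i j \<longleftrightarrow> (i, j) \<in> B"
  by (auto simp: beats_def Prs_def)

lemma lookup_score:
  assumes B: "B \<subseteq> Prs N"
  shows "Poly_Mapping.lookup (score N B) x = card {y. beats N B x y}"
proof -
  have fB: "finite B" using finite_subset[OF B finite_Prs] .
  have 1: "(\<Sum>p\<in>B. Poly_Mapping.lookup (Poly_Mapping.single (fst p) (1::nat)) x) = card {p\<in>B. fst p = x}"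
    using fB by (simp add: Poly_Mapping.lookup_single when_def sum.If_cases Int_def)
  have 2: "(\<Sum>p\<in>Prs N - B. Poly_Mapping.lookup (Poly_Mapping.single (snd p) (1::nat)) x) = card {p\<in>Prs N - B. snd p = x}"
    by (simp add: Poly_Mapping.lookup_single when_def sum.If_cases Int_def)
  have "Poly_Mapping.lookup (score N B) x = card {p\<in>B. fst p = x} + card {p\<in>Prs N - B. snd p = x}"
    unfolding score_def Poly_Mapping.lookup_add Poly_Mapping.lookup_sum 1 2 ..
  also have "card {p\<in>B. fst p = x} = card (snd ` {p\<in>B. fst p = x})"
    by (rule card_image[symmetric]) (auto simp: inj_on_def)
  also have "card {p\<in>Prs N - B. snd p = x} = card (fst ` {p\<in>Prs N - B. snd p = x})"
    by (rule card_image[symmetric]) (auto simp: inj_on_def)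
  also have "card (snd ` {p\<in>B. fst p = x}) + card (fst ` {p\<in>Prs N - B. snd p = x})
      = card (snd ` {p\<in>B. fst p = x} \<union> fst ` {p\<in>Prs N - B. snd p = x})"
  proof (rule card_Un_disjoint[symmetric])
    show "finite (snd ` {p\<in>B. fst p = x})" using fB by simp
    show "finite (fst ` {p\<in>Prs N - B. snd p = x})" by simp
    show "snd ` {p\<in>B. fst p = x} \<inter> fst ` {p\<in>Prs N - B. snd p = x} = {}"
      using B by (auto simp: Prs_def dest: Prs_lt)
  qed
  also have "snd ` {p\<in>B. fst p = x} \<union> fst ` {p\<in>Prs N - B. snd p = x} = {y. beats N B x y}"
    by (force simp: beats_def image_iff)
  finally show ?thesis .
qed

lemma beats_finite: "B \<subseteq> Prs N \<Longrightarrow> finite {y. beats N B x y}"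
  by (rule finite_subset[of _ "{1..N}"]) (auto dest: beats_V)

lemma score_lt:
  assumes "B \<subseteq> Prs N" "x \<in> {1..N}"
  shows "card {y. beats N B x y} < N"
proof -
  have "{y. beats N B x y} \<subseteq> {1..N} - {x}" using assms beats_V by blast
  then have "card {y. beats N B x y} \<le> card ({1..N} - {x})" by (rule card_mono[rotated]) simp
  also have "\<dots> = N - 1" using assms by simp
  finally show ?thesis using assms(2) by auto
qed

lemma tournament:
  assumes B: "B \<subseteq> Prs N" and inj: "inj_on (\<lambda>x. card {y. beats N B x y}) {1..N}"
  shows "x \<in> {1..N} \<Longrightarrow> {y. beats N B x y} = {y\<in>{1..N}. card {z. beats N B y z} < card {z. beats N B x z}}"
proof -
  define s where "s x = card {y. beats N B x y}" for x
  have inj': "inj_on s {1..N}" using inj by (simp add: s_def[abs_def])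
  have img: "s ` {1..N} = {0..<N}"
  proof (rule card_subset_eq)
    show "s ` {1..N} \<subseteq> {0..<N}" using score_lt[OF B] by (auto simp: s_def)
    show "card (s ` {1..N}) = card {0..<N}" using card_image[OF inj'] by simp
  qed simp
  have cardL: "card {y\<in>{1..N}. s y < m} = m" if "m \<le> N" for m
  proof -
    have "s ` {y\<in>{1..N}. s y < m} = {0..<m}"
    proof
      show "s ` {y\<in>{1..N}. s y < m} \<subseteq> {0..<m}" by auto
      show "{0..<m} \<subseteq> s ` {y\<in>{1..N}. s y < m}"
      proof
        fix k assume k: "k \<in> {0..<m}"
        then have "k \<in> s ` {1..N}" using img that by auto
        then obtain y where "y \<in> {1..N}" "k = s y" by blast
        then show "k \<in> s ` {y\<in>{1..N}. s y < m}" using k by auto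
      qed
    qed
    moreover have "inj_on s {y\<in>{1..N}. s y < m}" using inj' by (rule inj_on_subset) auto
    ultimately show ?thesis using card_image by fastforce
  qed
  show "x \<in> {1..N} \<Longrightarrow> {y. beats N B x y} = {y\<in>{1..N}. card {z. beats N B y z} < card {z. beats N B x z}}"
    unfolding s_def[symmetric]
  proof (induction "s x" arbitrary: x rule: less_induct)
    case less
    have sub: "{y\<in>{1..N}. s y < s x} \<subseteq> {y. beats N B x y}"
    proof
      fix z assume z: "z \<in> {y\<in>{1..N}. s y < s x}"
      then have eq: "{y. beats N B z y} = {y\<in>{1..N}. s y < s z}" using less by blast
      have "\<not> beats N B z x"
      proof
        assume "beats N B z x"
        then have "x \<in> {y. beats N B z y}" by simp
        then have "s x < s z" unfolding eq by simp
        then show False using z by simp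
      qed
      moreover have "z \<noteq> x" using z by auto
      ultimately show "z \<in> {y. beats N B x y}" using beats_total[of x N z B] less.prems z by auto
    qed
    have "card {y\<in>{1..N}. s y < s x} = s x" using cardL score_lt[OF B less.prems] by (simp add: s_def)
    then have "card {y\<in>{1..N}. s y < s x} = card {y. beats N B x y}" by (simp add: s_def)
    then show ?case using card_subset_eq[OF beats_finite[OF B] sub] by simp
  qed
qed

definition rel :: "nat \<Rightarrow> (nat \<Rightarrow> nat) \<Rightarrow> (nat \<times> nat) set" where
  "rel N w = {(i, j). (i, j) \<in> Prs N \<and> inv w i < inv w j}"

lemma rel_sub: "rel N w \<subseteq> Prs N"
proof
  fix p assume "p \<in> rel N w"
  then show "p \<in> Prs N" unfolding rel_def by (cases p) simp
qed

lemma inv_in: "w permutes {1..N} \<Longrightarrow> inv w x \<in> {1..N} \<longleftrightarrow> x \<in> {1..N}"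
  by (rule permutes_in_image[OF permutes_inv])

lemma beats_rel:
  assumes w: "w permutes {1..N}"
  shows "beats N (rel N w) x y \<longleftrightarrow> x \<in> {1..N} \<and> y \<in> {1..N} \<and> inv w x < inv w y"
proof -
  have injw: "x \<noteq> y \<Longrightarrow> inv w x \<noteq> inv w y"
    by (metis permutes_inverses(1)[OF w])
  show ?thesis
    unfolding beats_def rel_def Prs_def
    using injw by (cases x y rule: linorder_cases) auto
qed

lemma card_rel:
  assumes w: "w permutes {1..N}" and x: "x \<in> {1..N}"
  shows "card {y. beats N (rel N w) x y} = N - inv w x"
proof -
  have "{y. beats N (rel N w) x y} = {y\<in>{1..N}. inv w x < inv w y}"
    using beats_rel[OF w] x by auto
  moreover have "inv w ` {y\<in>{1..N}. inv w x < inv w y} = {inv w x<..N}"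
  proof
    show "inv w ` {y\<in>{1..N}. inv w x < inv w y} \<subseteq> {inv w x<..N}"
    proof (rule image_subsetI)
      fix y assume y: "y \<in> {y\<in>{1..N}. inv w x < inv w y}"
      then have "inv w y \<in> {1..N}" using inv_in[OF w] by blast
      then show "inv w y \<in> {inv w x<..N}" using y by simp
    qed
    show "{inv w x<..N} \<subseteq> inv w ` {y\<in>{1..N}. inv w x < inv w y}"
    proof
      fix k assume k: "k \<in> {inv w x<..N}"
      have kk: "k = inv w (w k)" using permutes_inverses(2)[OF w] by simp
      have "k \<in> {1..N}" using k by simp
      then have "w k \<in> {1..N}" using permutes_in_image[OF w] by blast
      then have "w k \<in> {y\<in>{1..N}. inv w x < inv w y}" using k kk by simp
      then show "k \<in> inv w ` {y\<in>{1..N}. inv w x < inv w y}" using kk by blast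
    qed
  qed
  moreover have "inj_on (inv w) {y\<in>{1..N}. inv w x < inv w y}"
  proof (rule inj_onI)
    fix a b assume "inv w a = inv w b"
    then have "w (inv w a) = w (inv w b)" by simp
    then show "a = b" by (simp add: permutes_inverses(1)[OF w])
  qed
  then have "card (inv w ` {y\<in>{1..N}. inv w x < inv w y}) = card {y\<in>{1..N}. inv w x < inv w y}"
    by (rule card_image)
  ultimately show ?thesis by simp
qed

lemma card_rel_inv:
  assumes w: "w permutes {1..N}"
  shows "card (Prs N - rel N w) = inversions N w"
proof -
  have eq: "Prs N - rel N w = {(a, b). (a, b) \<in> Prs N \<and> inv w b < inv w a}"
  proof -
    have "inv w a \<noteq> inv w b" if "(a, b) \<in> Prs N" for a b
      using that by (metis Prs_lt order.irrefl permutes_inverses(1)[OF w] subset_refl)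
    then show ?thesis unfolding rel_def by fastforce
  qed
  have "bij_betw (\<lambda>(i, j). (w j, w i))
     {(i, j). i \<in> {1..N} \<and> j \<in> {1..N} \<and> i < j \<and> w i > w j}
     {(a, b). (a, b) \<in> Prs N \<and> inv w b < inv w a}"
  proof (rule bij_betw_byWitness[where f' = "\<lambda>(a, b). (inv w b, inv w a)"])
    note wi = permutes_inverses[OF w]
    have wV: "\<And>x. w x \<in> {1..N} \<longleftrightarrow> x \<in> {1..N}" using permutes_in_image[OF w] by blast
    have iV: "\<And>x. inv w x \<in> {1..N} \<longleftrightarrow> x \<in> {1..N}" using permutes_in_image[OF permutes_inv[OF w]] by blast
    show "\<forall>a\<in>{(i, j). i \<in> {1..N} \<and> j \<in> {1..N} \<and> i < j \<and> w i > w j}.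
       (\<lambda>(a, b). (inv w b, inv w a)) ((\<lambda>(i, j). (w j, w i)) a) = a"
      by (clarsimp simp: wi)
    show "\<forall>a'\<in>{(a, b). (a, b) \<in> Prs N \<and> inv w b < inv w a}.
       (\<lambda>(i, j). (w j, w i)) ((\<lambda>(a, b). (inv w b, inv w a)) a') = a'"
      by (clarsimp simp: wi)
    show "(\<lambda>(i, j). (w j, w i)) ` {(i, j). i \<in> {1..N} \<and> j \<in> {1..N} \<and> i < j \<and> w i > w j}
       \<subseteq> {(a, b). (a, b) \<in> Prs N \<and> inv w b < inv w a}"
    proof (rule image_subsetI)
      fix p assume "p \<in> {(i, j). i \<in> {1..N} \<and> j \<in> {1..N} \<and> i < j \<and> w i > w j}"
      then obtain i j where p: "p = (i, j)" "i \<in> {1..N}" "j \<in> {1..N}" "i < j" "w j < w i" by blast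
      then have "w i \<in> {1..N}" "w j \<in> {1..N}" using wV by blast+
      then show "(\<lambda>(i, j). (w j, w i)) p \<in> {(a, b). (a, b) \<in> Prs N \<and> inv w b < inv w a}"
        using p by (simp add: wi Prs_def)
    qed
    show "(\<lambda>(a, b). (inv w b, inv w a)) ` {(a, b). (a, b) \<in> Prs N \<and> inv w b < inv w a}
       \<subseteq> {(i, j). i \<in> {1..N} \<and> j \<in> {1..N} \<and> i < j \<and> w i > w j}"
    proof (rule image_subsetI)
      fix p assume "p \<in> {(a, b). (a, b) \<in> Prs N \<and> inv w b < inv w a}"
      then obtain a b where p: "p = (a, b)" "a \<in> {1..N}" "b \<in> {1..N}" "a < b" "inv w b < inv w a"
        unfolding Prs_def by blast
      then have "inv w a \<in> {1..N}" "inv w b \<in> {1..N}" using iV by blast+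
      then show "(\<lambda>(a, b). (inv w b, inv w a)) p \<in> {(i, j). i \<in> {1..N} \<and> j \<in> {1..N} \<and> i < j \<and> w i > w j}"
        using p by (simp add: wi)
    qed
  qed
  then have "card {(i, j). i \<in> {1..N} \<and> j \<in> {1..N} \<and> i < j \<and> w i > w j}
     = card {(a, b). (a, b) \<in> Prs N \<and> inv w b < inv w a}" by (rule bij_betw_same_card)
  then show ?thesis unfolding inversions_def eq by simp
qed

lemma score_rel:
  assumes w: "w permutes {1..N}"
  shows "score N (rel N w) = (\<Sum>i\<in>{1..N}. Poly_Mapping.single (w i) (N - i))"
proof (rule poly_mapping_eqI)
  fix x
  have "Poly_Mapping.lookup (\<Sum>i\<in>{1..N}. Poly_Mapping.single (w i) (N - i)) x
      = (\<Sum>i\<in>{1..N}. if i = inv w x then N - i else 0)"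
  proof -
    have weq: "w i = x \<longleftrightarrow> i = inv w x" for i
      by (metis permutes_inverses[OF w])
    show ?thesis
      unfolding Poly_Mapping.lookup_sum Poly_Mapping.lookup_single when_def weq by simp
  qed
  also have "\<dots> = (if x \<in> {1..N} then N - inv w x else 0)"
    using inv_in[OF w, of x] by (simp add: sum.delta')
  also have "\<dots> = Poly_Mapping.lookup (score N (rel N w)) x"
  proof (cases "x \<in> {1..N}")
    case True
    have "Poly_Mapping.lookup (score N (rel N w)) x = card {y. beats N (rel N w) x y}"
      by (rule lookup_score[OF rel_sub])
    then show ?thesis using card_rel[OF w True] True by simp
  next
    case False
    then have "{y. beats N (rel N w) x y} = {}" using beats_rel[OF w] by auto
    moreover have "Poly_Mapping.lookup (score N (rel N w)) x = card {y. beats N (rel N w) x y}"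
      by (rule lookup_score[OF rel_sub])
    ultimately show ?thesis using False by auto
  qed
  finally show "Poly_Mapping.lookup (score N (rel N w)) x =
      Poly_Mapping.lookup (\<Sum>i\<in>{1..N}. Poly_Mapping.single (w i) (N - i)) x" by simp
qed

lemma rel_inj: "inj_on (rel N) {w. w permutes {1..N}}"
proof (rule inj_onI)
  fix w w' assume w: "w \<in> {w. w permutes {1..N}}" and w': "w' \<in> {w. w permutes {1..N}}"
    and eq: "rel N w = rel N w'"
  have wp: "w permutes {1..N}" using w by simp
  have wp': "w' permutes {1..N}" using w' by simp
  have "inv w x = inv w' x" for x
  proof (cases "x \<in> {1..N}")
    case True
    have c1: "card {y. beats N (rel N w) x y} = N - inv w x" by (rule card_rel[OF wp True])
    have c2: "card {y. beats N (rel N w') x y} = N - inv w' x" by (rule card_rel[OF wp' True])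
    have "N - inv w x = N - inv w' x" using c1 c2 eq by simp
    moreover have "inv w x \<in> {1..N}" using inv_in[OF wp] True by simp
    moreover have "inv w' x \<in> {1..N}" using inv_in[OF wp'] True by simp
    ultimately show ?thesis by (simp; arith)
  next
    case False
    have "inv w x = x" by (rule permutes_not_in[OF permutes_inv[OF wp] False])
    moreover have "inv w' x = x" by (rule permutes_not_in[OF permutes_inv[OF wp'] False])
    ultimately show ?thesis by simp
  qed
  then have ii: "inv w = inv w'" by (rule ext)
  have "w = inv (inv w)" using permutes_inv_inv[OF wp] by simp
  also have "\<dots> = inv (inv w')" using ii by simp
  also have "\<dots> = w'" using permutes_inv_inv[OF wp'] by simp
  finally show "w = w'" .
qed

lemma good_is_rel:
  assumes B: "B \<subseteq> Prs N" and inj: "inj_on (\<lambda>x. card {y. beats N B x y}) {1..N}"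
  shows "\<exists>w. w permutes {1..N} \<and> B = rel N w"
proof -
  define s where "s x = card {y. beats N B x y}" for x
  define r where "r x = (if x \<in> {1..N} then N - s x else x)" for x
  have slt: "x \<in> {1..N} \<Longrightarrow> s x < N" for x unfolding s_def by (rule score_lt[OF B])
  have rin: "x \<in> {1..N} \<Longrightarrow> r x = N - s x" for x by (simp add: r_def)
  have injr: "inj_on r {1..N}"
  proof (rule inj_onI)
    fix x y assume x: "x \<in> {1..N}" and y: "y \<in> {1..N}" and "r x = r y"
    then have "N - s x = N - s y" using rin by simp
    then have "s x = s y" using slt[OF x] slt[OF y] by simp
    then show "x = y" by (intro inj_onD[OF inj _ x y]) (simp add: s_def)
  qed
  have "r ` {1..N} \<subseteq> {1..N}"
  proof (rule image_subsetI)
    fix x assume x: "x \<in> {1..N}"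
    then show "r x \<in> {1..N}" using slt[OF x] rin[OF x] by simp
  qed
  then have img: "r ` {1..N} = {1..N}" by (intro endo_inj_surj[OF _ _ injr]) simp_all
  have rp: "r permutes {1..N}"
  proof (rule bij_imp_permutes)
    show "bij_betw r {1..N} {1..N}" using injr img by (simp add: bij_betw_def)
    show "\<And>x. x \<notin> {1..N} \<Longrightarrow> r x = x" unfolding r_def by auto
  qed
  define w where "w = inv r"
  have wp: "w permutes {1..N}" unfolding w_def by (rule permutes_inv[OF rp])
  have iw: "inv w = r" unfolding w_def by (rule permutes_inv_inv[OF rp])
  have "B = rel N w"
  proof (rule set_eqI)
    fix p :: "nat \<times> nat"
    obtain i j where p: "p = (i, j)" by (cases p)
    show "p \<in> B \<longleftrightarrow> p \<in> rel N w"
    proof (cases "(i, j) \<in> Prs N")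
      case False
      then show ?thesis using B rel_sub[of N w] p by blast
    next
      case True
      then have ij: "i \<in> {1..N}" "j \<in> {1..N}" unfolding Prs_def by simp_all
      have "p \<in> B \<longleftrightarrow> beats N B i j" using beats_in[OF B True] p by simp
      also have "\<dots> \<longleftrightarrow> j \<in> {y. beats N B i y}" by simp
      also have "\<dots> \<longleftrightarrow> s j < s i"
      proof -
        have T: "{y. beats N B i y} = {y\<in>{1..N}. s y < s i}"
          unfolding s_def by (rule tournament[OF B inj ij(1)])
        show ?thesis unfolding T using ij(2) by simp
      qed
      also have "\<dots> \<longleftrightarrow> r i < r j" using slt[OF ij(1)] slt[OF ij(2)] rin[OF ij(1)] rin[OF ij(2)] by (simp; arith)
      also have "\<dots> \<longleftrightarrow> p \<in> rel N w"
      proof -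
        have "p \<in> rel N w \<longleftrightarrow> inv w i < inv w j" using True p unfolding rel_def by simp
        then show ?thesis using iw by simp
      qed
      finally show ?thesis .
    qed
  qed
  then show ?thesis using wp by blast
qed

lemma flips_card:
  assumes ab: "a < b" "a \<in> {1..N}" "b \<in> {1..N}"
  shows "odd (card {p\<in>Prs N. transpose a b (snd p) < transpose a b (fst p)})"
proof -
  let ?s = "transpose a b"
  have eq: "{p\<in>Prs N. ?s (snd p) < ?s (fst p)} = insert (a, b) (Pair a ` {a<..<b} \<union> (\<lambda>m. (m, b)) ` {a<..<b})"
  proof (rule set_eqI)
    fix p :: "nat \<times> nat"
    obtain i j where p: "p = (i, j)" by (cases p)
    show "p \<in> {p\<in>Prs N. ?s (snd p) < ?s (fst p)} \<longleftrightarrow> p \<in> insert (a, b) (Pair a ` {a<..<b} \<union> (\<lambda>m. (m, b)) ` {a<..<b})"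
      using ab unfolding p Prs_def
      by (cases "i = a"; cases "i = b"; cases "j = a"; cases "j = b") (auto simp: transpose_def)
  qed
  have d1: "(a, b) \<notin> Pair a ` {a<..<b} \<union> (\<lambda>m. (m, b)) ` {a<..<b}" by auto
  have d2: "Pair a ` {a<..<b} \<inter> (\<lambda>m. (m, b)) ` {a<..<b} = {}" by auto
  have c1: "card (Pair a ` {a<..<b}) = b - Suc a" by (simp add: card_image inj_on_def)
  have c2: "card ((\<lambda>m. (m, b)) ` {a<..<b}) = b - Suc a" by (simp add: card_image inj_on_def)
  have "card {p\<in>Prs N. ?s (snd p) < ?s (fst p)} = Suc ((b - Suc a) + (b - Suc a))"
    unfolding eq using d1 d2 c1 c2 by (simp add: card_Un_disjoint)
  then show ?thesis by simp
qed

lemma prod_sign: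
  fixes P :: "'a \<Rightarrow> bool"
  assumes "finite A"
  shows "(\<Prod>p\<in>A. if P p then -1 else (1::int)) = (-1) ^ card {p\<in>A. P p}"
proof -
  have "(\<Prod>p\<in>A. if P p then -1 else (1::int)) = (\<Prod>p\<in>A \<inter> {p. P p}. -1) * (\<Prod>p\<in>A \<inter> - {p. P p}. 1)"
    by (rule prod.If_cases[OF assms])
  also have "\<dots> = (-1) ^ card (A \<inter> {p. P p})" by simp
  also have "A \<inter> {p. P p} = {p\<in>A. P p}" by blast
  finally show ?thesis .
qed

lemma core_parity:
  fixes h :: "nat \<Rightarrow> nat \<Rightarrow> int"
  assumes ab: "a < b" "a \<in> {1..N}" "b \<in> {1..N}"
    and anti: "\<And>u v. u \<in> {1..N} \<Longrightarrow> v \<in> {1..N} \<Longrightarrow> u \<noteq> v \<Longrightarrow> h v u = - h u v"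
  shows "(\<Prod>p\<in>Prs N. h (transpose a b (fst p)) (transpose a b (snd p))) = - (\<Prod>p\<in>Prs N. h (fst p) (snd p))"
proof -
  let ?s = "transpose a b"
  have sp: "?s permutes {1..N}" using ab by (simp add: permutes_swap_id)
  have sV: "?s x \<in> {1..N} \<longleftrightarrow> x \<in> {1..N}" for x by (rule permutes_in_image[OF sp])
  have sinj: "?s x = ?s y \<longleftrightarrow> x = y" for x y by (metis transpose_involutory)
  define m where "m p = (min (?s (fst p)) (?s (snd p)), max (?s (fst p)) (?s (snd p)))" for p
  have mP: "m p \<in> Prs N" if p: "p \<in> Prs N" for p
  proof -
    obtain i j where pij: "p = (i, j)" "i \<in> {1..N}" "j \<in> {1..N}" "i < j" using p unfolding Prs_def by auto
    have "?s i \<in> {1..N}" "?s j \<in> {1..N}" "?s i \<noteq> ?s j" using pij sV sinj by auto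
    then show ?thesis unfolding m_def Prs_def pij by (auto simp: min_def max_def)
  qed
  have mm: "m (m p) = p" if p: "p \<in> Prs N" for p
  proof -
    obtain i j where pij: "p = (i, j)" "i < j" using p unfolding Prs_def by auto
    show ?thesis
    proof (cases "?s i < ?s j")
      case True
      then show ?thesis unfolding m_def pij using pij(2) by (simp add: min_def max_def)
    next
      case False
      then have "?s j < ?s i" using sinj[of i j] pij(2) by auto
      then show ?thesis unfolding m_def pij using pij(2) by (simp add: min_def max_def)
    qed
  qed
  have bij: "bij_betw m (Prs N) (Prs N)"
    by (rule bij_betw_byWitness[where f' = m]) (use mm mP in auto)
  have split: "h (?s (fst p)) (?s (snd p)) = (if ?s (snd p) < ?s (fst p) then -1 else 1) * h (fst (m p)) (snd (m p))"
    if p: "p \<in> Prs N" for p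
  proof -
    obtain i j where pij: "p = (i, j)" "i \<in> {1..N}" "j \<in> {1..N}" "i < j" using p unfolding Prs_def by auto
    show ?thesis
    proof (cases "?s j < ?s i")
      case True
      have "?s i \<in> {1..N}" "?s j \<in> {1..N}" "?s i \<noteq> ?s j" using pij sV sinj by auto
      then have "h (?s i) (?s j) = - h (?s j) (?s i)" by (intro anti) auto
      then show ?thesis using True unfolding m_def pij by (simp add: min_def max_def)
    next
      case False
      then show ?thesis unfolding m_def pij by (simp add: min_def max_def)
    qed
  qed
  have "(\<Prod>p\<in>Prs N. h (?s (fst p)) (?s (snd p)))
      = (\<Prod>p\<in>Prs N. (if ?s (snd p) < ?s (fst p) then -1 else 1) * h (fst (m p)) (snd (m p)))"
    by (rule prod.cong) (simp_all add: split)
  also have "\<dots> = (\<Prod>p\<in>Prs N. (if ?s (snd p) < ?s (fst p) then -1 else 1)) * (\<Prod>p\<in>Prs N. h (fst (m p)) (snd (m p)))"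
    by (rule prod.distrib)
  also have "(\<Prod>p\<in>Prs N. h (fst (m p)) (snd (m p))) = (\<Prod>p\<in>Prs N. h (fst p) (snd p))"
    by (rule prod.reindex_bij_betw[OF bij, where g = "\<lambda>p. h (fst p) (snd p)"])
  also have "(\<Prod>p\<in>Prs N. (if ?s (snd p) < ?s (fst p) then -1 else (1::int))) = -1"
  proof -
    have "(\<Prod>p\<in>Prs N. (if ?s (snd p) < ?s (fst p) then -1 else (1::int))) = (-1) ^ card {p\<in>Prs N. ?s (snd p) < ?s (fst p)}"
      by (rule prod_sign) simp
    then show ?thesis using flips_card[OF ab] by simp
  qed
  finally show ?thesis by simp
qed

lemma sign_beats:
  assumes C: "C \<subseteq> Prs N"
  shows "(\<Prod>p\<in>Prs N. if beats N C (snd p) (fst p) then -1 else (1::int)) = (-1) ^ card (Prs N - C)"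
proof -
  have "{p\<in>Prs N. beats N C (snd p) (fst p)} = Prs N - C"
  proof (rule set_eqI)
    fix p :: "nat \<times> nat"
    obtain i j where p: "p = (i, j)" by (cases p)
    show "p \<in> {p\<in>Prs N. beats N C (snd p) (fst p)} \<longleftrightarrow> p \<in> Prs N - C"
    proof (cases "(i, j) \<in> Prs N")
      case True
      then have "(j, i) \<notin> C" using C unfolding Prs_def by auto
      then show ?thesis using True unfolding p beats_def by auto
    next
      case False
      then show ?thesis unfolding p by simp
    qed
  qed
  moreover have "(\<Prod>p\<in>Prs N. if beats N C (snd p) (fst p) then -1 else (1::int))
      = (-1) ^ card {p\<in>Prs N. beats N C (snd p) (fst p)}"
    by (rule prod_sign) simp
  ultimately show ?thesis by simp
qed

lemma invol_zero:
  assumes ab: "a < b" "a \<in> {1..N}" "b \<in> {1..N}"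
    and g: "Poly_Mapping.lookup \<gamma> a = Poly_Mapping.lookup \<gamma> b"
  shows "(\<Sum>B\<in>{B\<in>Pow (Prs N). score N B = \<gamma>}. (-1::int) ^ card (Prs N - B)) = 0"
proof -
  let ?s = "transpose a b"
  have sp: "?s permutes {1..N}" using ab by (simp add: permutes_swap_id)
  have sV: "?s x \<in> {1..N} \<longleftrightarrow> x \<in> {1..N}" for x by (rule permutes_in_image[OF sp])
  have sinj: "?s x = ?s y \<longleftrightarrow> x = y" for x y by (metis transpose_involutory)
  define psi where "psi B = {p\<in>Prs N. beats N B (?s (fst p)) (?s (snd p))}" for B
  have mem: "p \<in> psi B \<longleftrightarrow> p \<in> Prs N \<and> beats N B (?s (fst p)) (?s (snd p))" for p B
    unfolding psi_def by simp
  have P1: "psi B \<subseteq> Prs N" for B using mem by blast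
  have P2: "beats N (psi B) x y \<longleftrightarrow> beats N B (?s x) (?s y)" if B: "B \<subseteq> Prs N" for B x y
  proof
    assume h: "beats N (psi B) x y"
    then have "(x, y) \<in> psi B \<or> ((y, x) \<in> Prs N \<and> (y, x) \<notin> psi B)" unfolding beats_def by auto
    then show "beats N B (?s x) (?s y)"
    proof
      assume "(x, y) \<in> psi B" then show ?thesis using mem by simp
    next
      assume c: "(y, x) \<in> Prs N \<and> (y, x) \<notin> psi B"
      then have nb: "\<not> beats N B (?s y) (?s x)" using mem by simp
      have "y \<in> {1..N}" "x \<in> {1..N}" "y < x" using c unfolding Prs_def by auto
      then have "?s y \<in> {1..N}" "?s x \<in> {1..N}" "?s y \<noteq> ?s x" using sV sinj by auto
      then show ?thesis using beats_total[of "?s x" N "?s y" B] nb by auto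
    qed
  next
    assume h: "beats N B (?s x) (?s y)"
    then have "?s x \<in> {1..N}" "?s y \<in> {1..N}" "?s x \<noteq> ?s y" using beats_V[OF B] by auto
    then have xy: "x \<in> {1..N}" "y \<in> {1..N}" "x \<noteq> y" using sV by auto
    show "beats N (psi B) x y"
    proof (cases "x < y")
      case True
      then have "(x, y) \<in> Prs N" using xy unfolding Prs_def by auto
      then have "(x, y) \<in> psi B" using h mem by simp
      then show ?thesis unfolding beats_def by simp
    next
      case False
      then have "y < x" using xy by simp
      then have "(y, x) \<in> Prs N" using xy unfolding Prs_def by auto
      moreover have "\<not> beats N B (?s y) (?s x)" using beats_asym[OF B h] .
      ultimately have "(y, x) \<in> Prs N - psi B" using mem by simp
      then show ?thesis unfolding beats_def by simp
    qed
  qed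
  have P3: "psi (psi B) = B" if B: "B \<subseteq> Prs N" for B
  proof (rule set_eqI)
    fix p :: "nat \<times> nat"
    obtain i j where p: "p = (i, j)" by (cases p)
    show "p \<in> psi (psi B) \<longleftrightarrow> p \<in> B"
    proof (cases "(i, j) \<in> Prs N")
      case True
      have "p \<in> psi (psi B) \<longleftrightarrow> beats N (psi B) (?s i) (?s j)" using mem True p by simp
      also have "\<dots> \<longleftrightarrow> beats N B i j" using P2[OF B] by simp
      also have "\<dots> \<longleftrightarrow> p \<in> B" using beats_in[OF B True] p by simp
      finally show ?thesis .
    next
      case False
      then show ?thesis using B P1 p by blast
    qed
  qed
  have P4: "score N (psi B) = \<gamma>" if B: "B \<subseteq> Prs N" and sc: "score N B = \<gamma>" for B
  proof (rule poly_mapping_eqI)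
    fix x
    have "Poly_Mapping.lookup (score N (psi B)) x = card {y. beats N (psi B) x y}"
      by (rule lookup_score[OF P1])
    also have "{y. beats N (psi B) x y} = ?s ` {y. beats N B (?s x) y}"
    proof (rule set_eqI)
      fix y
      have "y \<in> ?s ` {y. beats N B (?s x) y} \<longleftrightarrow> ?s y \<in> {y. beats N B (?s x) y}"
      proof
        assume "y \<in> ?s ` {y. beats N B (?s x) y}"
        then obtain z where "z \<in> {y. beats N B (?s x) y}" "y = ?s z" by blast
        then show "?s y \<in> {y. beats N B (?s x) y}" by simp
      next
        assume "?s y \<in> {y. beats N B (?s x) y}"
        then have "?s (?s y) \<in> ?s ` {y. beats N B (?s x) y}" by (rule imageI)
        then show "y \<in> ?s ` {y. beats N B (?s x) y}" by simp
      qed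
      then show "y \<in> {y. beats N (psi B) x y} \<longleftrightarrow> y \<in> ?s ` {y. beats N B (?s x) y}"
        using P2[OF B, of x y] by simp
    qed
    also have "card (?s ` {y. beats N B (?s x) y}) = card {y. beats N B (?s x) y}"
      by (rule card_image) (simp add: inj_on_def sinj)
    also have "\<dots> = Poly_Mapping.lookup (score N B) (?s x)"
      by (rule lookup_score[OF B, symmetric])
    also have "\<dots> = Poly_Mapping.lookup \<gamma> x"
      unfolding sc using g by (simp add: transpose_def)
    finally show "Poly_Mapping.lookup (score N (psi B)) x = Poly_Mapping.lookup \<gamma> x" .
  qed
  have P5: "(-1::int) ^ card (Prs N - psi B) = - ((-1) ^ card (Prs N - B))" if B: "B \<subseteq> Prs N" for B
  proof -
    define h where "h u v = (if beats N B v u then -1 else (1::int))" for u v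
    have anti: "h v u = - h u v" if "u \<in> {1..N}" "v \<in> {1..N}" "u \<noteq> v" for u v
    proof (cases "beats N B v u")
      case True
      then have "\<not> beats N B u v" by (rule beats_asym[OF B])
      then show ?thesis using True unfolding h_def by simp
    next
      case False
      then have "beats N B u v" using beats_total[OF that, of B] by blast
      then show ?thesis using False unfolding h_def by simp
    qed
    have "(-1::int) ^ card (Prs N - psi B) = (\<Prod>p\<in>Prs N. if beats N (psi B) (snd p) (fst p) then -1 else (1::int))"
      by (rule sign_beats[OF P1, symmetric])
    also have "\<dots> = (\<Prod>p\<in>Prs N. h (?s (fst p)) (?s (snd p)))"
      unfolding h_def using P2[OF B] by simp
    also have "\<dots> = - (\<Prod>p\<in>Prs N. h (fst p) (snd p))"
      by (rule core_parity[OF ab anti])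
    also have "(\<Prod>p\<in>Prs N. h (fst p) (snd p)) = (-1) ^ card (Prs N - B)"
      unfolding h_def by (rule sign_beats[OF B])
    finally show ?thesis .
  qed
  define A where "A = {B\<in>Pow (Prs N). score N B = \<gamma>}"
  have bij: "bij_betw psi A A"
  proof (rule bij_betw_byWitness[where f' = psi])
    show "\<forall>a\<in>A. psi (psi a) = a" using P3 unfolding A_def by blast
    show "\<forall>a\<in>A. psi (psi a) = a" using P3 unfolding A_def by blast
    show "psi ` A \<subseteq> A" using P1 P4 unfolding A_def by blast
    show "psi ` A \<subseteq> A" using P1 P4 unfolding A_def by blast
  qed
  have "(\<Sum>B\<in>A. (-1::int) ^ card (Prs N - B)) = (\<Sum>B\<in>A. (-1::int) ^ card (Prs N - psi B))"
    by (rule sum.reindex_bij_betw[OF bij, symmetric])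
  also have "\<dots> = (\<Sum>B\<in>A. - ((-1::int) ^ card (Prs N - B)))"
    by (rule sum.cong) (simp_all add: A_def P5)
  also have "\<dots> = - (\<Sum>B\<in>A. (-1::int) ^ card (Prs N - B))"
    by (simp add: sum_negf)
  finally show ?thesis unfolding A_def by simp
qed

lemma score_rel_lookup:
  assumes w: "w permutes {1..N}" and x: "x \<in> {1..N}"
  shows "Poly_Mapping.lookup (score N (rel N w)) x = N - inv w x"
  using lookup_score[OF rel_sub] card_rel[OF w x] by simp

theorem mainTheorem1:
  fixes N :: nat
  assumes "N \<ge> 1"
  shows "\<exists>R :: mpoly.
    (\<Prod>(i, j) \<in> {(i, j). i \<in> {1..N} \<and> j \<in> {1..N} \<and> i < j}.
        zvar i - const tvar * zvar j)
    = (\<Sum>w \<in> {w. w permutes {1..N}}.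
         const ((- tvar) ^ inversions N w) * (\<Prod>i \<in> {1..N}. zvar (w i) ^ (N - i)))
      + R
    \<and> (\<forall>\<gamma> :: nat \<Rightarrow>\<^sub>0 nat. Poly_Mapping.lookup R \<gamma> \<noteq> 0 \<longrightarrow>
          (\<exists>i \<in> {1..N}. \<exists>j \<in> {1..N}. i \<noteq> j \<and> Poly_Mapping.lookup \<gamma> i = Poly_Mapping.lookup \<gamma> j)
          \<and> poly (Poly_Mapping.lookup R \<gamma>) 1 = 0)"
proof -
  define Perms where "Perms = {w. w permutes {1..N}}"
  define Good where "Good = rel N ` Perms"
  define Bad where "Bad = Pow (Prs N) - Good"
  define R where "R = (\<Sum>B\<in>Bad. tterm N B)"
  have finPow: "finite (Pow (Prs N))" by simp
  have GoodSub: "Good \<subseteq> Pow (Prs N)" unfolding Good_def using rel_sub by blast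
  have S: "(\<Sum>w \<in> {w. w permutes {1..N}}.
         const ((- tvar) ^ inversions N w) * (\<Prod>i \<in> {1..N}. zvar (w i) ^ (N - i)))
      = (\<Sum>B\<in>Good. tterm N B)"
  proof -
    have "(\<Sum>w \<in> {w. w permutes {1..N}}.
         const ((- tvar) ^ inversions N w) * (\<Prod>i \<in> {1..N}. zvar (w i) ^ (N - i)))
        = (\<Sum>w\<in>Perms. tterm N (rel N w))"
      unfolding Perms_def
    proof (rule sum.cong)
      fix w assume "w \<in> {w. w permutes {1..N}}"
      then have w: "w permutes {1..N}" by simp
      show "const ((- tvar) ^ inversions N w) * (\<Prod>i \<in> {1..N}. zvar (w i) ^ (N - i)) = tterm N (rel N w)"
        unfolding sterm tterm_def score_rel[OF w] card_rel_inv[OF w] ..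
    qed simp
    also have "\<dots> = (\<Sum>B\<in>Good. tterm N B)"
      unfolding Good_def Perms_def by (rule sum.reindex[OF rel_inj, symmetric, unfolded comp_def])
    finally show ?thesis .
  qed
  have P: "(\<Prod>(i, j) \<in> {(i, j). i \<in> {1..N} \<and> j \<in> {1..N} \<and> i < j}.
        zvar i - const tvar * zvar j) = (\<Sum>B\<in>Good. tterm N B) + R"
    unfolding expand R_def Bad_def
    using sum.subset_diff[OF GoodSub finPow, of "tterm N"] by (simp add: add.commute)
  have lookR: "Poly_Mapping.lookup R \<gamma> = (\<Sum>B\<in>Bad. if score N B = \<gamma> then (- tvar) ^ card (Prs N - B) else 0)" for \<gamma>
    unfolding R_def tterm_def Poly_Mapping.lookup_sum Poly_Mapping.lookup_single when_def by simp
  have goodinj: "\<exists>i\<in>{1..N}. \<exists>j\<in>{1..N}. i \<noteq> j \<and> Poly_Mapping.lookup \<gamma> i = Poly_Mapping.lookup \<gamma> j"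
    if B: "B \<in> Bad" and sc: "score N B = \<gamma>" for B \<gamma>
  proof (rule ccontr)
    assume "\<not> ?thesis"
    then have inj: "inj_on (Poly_Mapping.lookup \<gamma>) {1..N}" unfolding inj_on_def by blast
    have Bs: "B \<subseteq> Prs N" using B unfolding Bad_def by blast
    have "inj_on (\<lambda>x. card {y. beats N B x y}) {1..N}"
      using inj unfolding sc[symmetric] lookup_score[OF Bs] .
    then obtain w where "w permutes {1..N}" "B = rel N w" using good_is_rel[OF Bs] by blast
    then have "B \<in> Good" unfolding Good_def Perms_def by blast
    then show False using B unfolding Bad_def by blast
  qed
  have notgood: "B \<notin> Good" if "score N B = \<gamma>" and ij: "i \<in> {1..N}" "j \<in> {1..N}" "i \<noteq> j"
    "Poly_Mapping.lookup \<gamma> i = Poly_Mapping.lookup \<gamma> j" for B \<gamma> i j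
  proof
    assume "B \<in> Good"
    then obtain w where w: "w permutes {1..N}" and Bw: "B = rel N w" unfolding Good_def Perms_def by blast
    have "N - inv w i = N - inv w j"
      using ij(4) score_rel_lookup[OF w ij(1)] score_rel_lookup[OF w ij(2)] that(1) Bw by simp
    moreover have "inv w i \<in> {1..N}" "inv w j \<in> {1..N}" using inv_in[OF w] ij by auto
    ultimately have "inv w i = inv w j" by (simp; arith)
    then have "w (inv w i) = w (inv w j)" by simp
    then show False using ij(3) by (simp add: permutes_inverses(1)[OF w])
  qed
  have cond: "(\<exists>i \<in> {1..N}. \<exists>j \<in> {1..N}. i \<noteq> j \<and> Poly_Mapping.lookup \<gamma> i = Poly_Mapping.lookup \<gamma> j)
          \<and> poly (Poly_Mapping.lookup R \<gamma>) 1 = 0" if nz: "Poly_Mapping.lookup R \<gamma> \<noteq> 0" for \<gamma>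
  proof -
    obtain B where B: "B \<in> Bad" "score N B = \<gamma>"
    proof (rule ccontr)
      assume "\<not> thesis"
      then have "\<forall>B\<in>Bad. score N B \<noteq> \<gamma>" using that by blast
      then have "Poly_Mapping.lookup R \<gamma> = 0" unfolding lookR by (intro sum.neutral) auto
      then show False using nz by simp
    qed
    obtain i j where ij: "i \<in> {1..N}" "j \<in> {1..N}" "i \<noteq> j" "Poly_Mapping.lookup \<gamma> i = Poly_Mapping.lookup \<gamma> j"
      using goodinj[OF B] by blast
    define a where "a = min i j"
    define b where "b = max i j"
    have ab: "a < b" "a \<in> {1..N}" "b \<in> {1..N}" "Poly_Mapping.lookup \<gamma> a = Poly_Mapping.lookup \<gamma> b"
      using ij unfolding a_def b_def by (auto simp: min_def max_def)
    have "poly (Poly_Mapping.lookup R \<gamma>) 1 = (\<Sum>B\<in>Bad. if score N B = \<gamma> then (-1::int) ^ card (Prs N - B) else 0)"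
      unfolding lookR poly_sum by (rule sum.cong) (simp_all add: tvar_def poly_power)
    also have "\<dots> = (\<Sum>B\<in>{B\<in>Bad. score N B = \<gamma>}. (-1::int) ^ card (Prs N - B))"
      by (rule sum.inter_filter[symmetric]) (simp add: Bad_def)
    also have "{B\<in>Bad. score N B = \<gamma>} = {B\<in>Pow (Prs N). score N B = \<gamma>}"
      unfolding Bad_def using notgood[OF _ ij] by blast
    also have "(\<Sum>B\<in>{B\<in>Pow (Prs N). score N B = \<gamma>}. (-1::int) ^ card (Prs N - B)) = 0"
      by (rule invol_zero[OF ab])
    finally show ?thesis using ij by blast
  qed
  show ?thesis
    apply (rule exI[of _ R])
    using P S cond by simp
qed


end
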